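(* For each integer $r\ge 1$, let $G_r = (rK_1 \cup (K_1 \nabla (r+1)K_1)) \nabla (rK_1 \cup (K_1 \nabla (r+1)K_1))$, a graph of order $4r+4$. Then $LE(G_r)=LE(K_{4r+4})=8r+6$ (i.e. $G_r$ is $L$-borderenergetic), and $G_r$ and $K_{4r+4}$ have different Laplacian spectra.
   Context: All graphs are finite, simple and undirected. The Laplacian matrix of $G$ is $L(G)=D-A$ ($D$ degree matrix, $A$ adjacency matrix). For a graph $G$ on $n$ vertices with Laplacian eigenvalues $\mu_1,\dots,\mu_n$ and average degree $\overline d = 2|E(G)|/n$, the Laplacian energy is $LE(G)=\sum_{i=1}^n|\mu_i-\overline d|$. One has $LE(K_n)=2n-2$. A graph $G$ on $n$ vertices is $L$-borderenergetic if $LE(G)=LE(K_n)$. $K_m$ is the complete graph on $m$ vertices, $mG$ is the disjoint union of $m$ copies of $G$, $G_1\cup G_2$ is the disjoint union, and the join $G_1\nabla G_2$ is obtained from $G_1\cup G_2$ by adding all edges between a vertex of $G_1$ and a vertex of $G_2$. *)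

theory Defs
  imports "Jordan_Normal_Form.Matrix" "Jordan_Normal_Form.Char_Poly"
          "HOL-Computational_Algebra.Polynomial"
begin

text \<open>A finite simple graph on the vertex set {0..<n}, given by its order n and a
  symmetric irreflexive adjacency relation (only its restriction to {0..<n} matters).\<close>
type_synonym graph = "nat \<times> (nat \<Rightarrow> nat \<Rightarrow> bool)"

definition order_g :: "graph \<Rightarrow> nat" where "order_g G = fst G"
definition adj :: "graph \<Rightarrow> nat \<Rightarrow> nat \<Rightarrow> bool" where
  "adj G i j = (i < fst G \<and> j < fst G \<and> i \<noteq> j \<and> snd G i j \<and> snd G j i)"

definition complete_graph :: "nat \<Rightarrow> graph" where
  "complete_graph n = (n, \<lambda>i j. i \<noteq> j)"

definition empty_graph :: "nat \<Rightarrow> graph" where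
  "empty_graph m = (m, \<lambda>i j. False)"

definition gunion :: "graph \<Rightarrow> graph \<Rightarrow> graph" where
  "gunion G1 G2 = (order_g G1 + order_g G2,
     \<lambda>i j. (i < order_g G1 \<and> j < order_g G1 \<and> adj G1 i j) \<or>
           (order_g G1 \<le> i \<and> order_g G1 \<le> j \<and> adj G2 (i - order_g G1) (j - order_g G1)))"

definition gjoin :: "graph \<Rightarrow> graph \<Rightarrow> graph" where
  "gjoin G1 G2 = (order_g G1 + order_g G2,
     \<lambda>i j. snd (gunion G1 G2) i j \<or>
           (i < order_g G1 \<and> order_g G1 \<le> j \<and> j < order_g G1 + order_g G2) \<or>
           (j < order_g G1 \<and> order_g G1 \<le> i \<and> i < order_g G1 + order_g G2))"

definition degree :: "graph \<Rightarrow> nat \<Rightarrow> nat" where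
  "degree G i = card {j. j < order_g G \<and> adj G i j}"

definition num_edges :: "graph \<Rightarrow> nat" where
  "num_edges G = card {(i, j). i < j \<and> j < order_g G \<and> adj G i j}"

definition laplacian :: "graph \<Rightarrow> real mat" where
  "laplacian G = mat (order_g G) (order_g G)
     (\<lambda>(i, j). if i = j then real (degree G i) else if adj G i j then -1 else 0)"

text \<open>Laplacian spectrum: multiset of roots of the characteristic polynomial
  (the Laplacian is real symmetric, so all n eigenvalues are real).\<close>
definition lap_spectrum :: "graph \<Rightarrow> real multiset" where
  "lap_spectrum G = proots (char_poly (laplacian G))"

definition avg_degree :: "graph \<Rightarrow> real" where
  "avg_degree G = 2 * real (num_edges G) / real (order_g G)"

definition lap_energy :: "graph \<Rightarrow> real" where
  "lap_energy G = (\<Sum>\<^sub># (image_mset (\<lambda>\<mu>. \<bar>\<mu> - avg_degree G\<bar>) (lap_spectrum G)))"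

definition L_borderenergetic :: "graph \<Rightarrow> bool" where
  "L_borderenergetic G = (lap_energy G = lap_energy (complete_graph (order_g G)))"

definition G_r :: "nat \<Rightarrow> graph" where
  "G_r r = (let H = gunion (empty_graph r) (gjoin (empty_graph 1) (empty_graph (r + 1)))
            in gjoin H H)"

end

theory Submission
  imports Defs "Jordan_Normal_Form.Schur_Decomposition"
begin


definition Qm :: "(nat \<Rightarrow> nat) \<Rightarrow> nat \<Rightarrow> nat \<Rightarrow> real" where
  "Qm f a b = (if f a = f b \<and> a \<le> b then 1 else 0)"
definition Pm :: "(nat \<Rightarrow> nat) \<Rightarrow> nat \<Rightarrow> nat \<Rightarrow> real" where
  "Pm f m b = (if m = b then 1 else 0) - (if f b \<noteq> b \<and> m = b - 1 then 1 else 0)"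

lemma sum_P:
  fixes g :: "nat \<Rightarrow> real"
  assumes "b < n" "\<forall>i<n. f i \<le> i"
  shows "(\<Sum>m<n. g m * Pm f m b) = g b - (if f b \<noteq> b then g (b-1) else 0)"
proof -
  have "(\<Sum>m<n. g m * Pm f m b) = (\<Sum>m<n. (if m = b then g m else 0)) - (\<Sum>m<n. if f b \<noteq> b \<and> m = b - 1 then g m else 0)"
    unfolding Pm_def sum_subtractf[symmetric] by (rule sum.cong) (auto simp: right_diff_distrib)
  also have "(\<Sum>m<n. (if m = b then g m else 0)) = g b" using assms by (simp add: sum.delta)
  also have "(\<Sum>m<n. if f b \<noteq> b \<and> m = b - 1 then g m else 0) = (if f b \<noteq> b then g (b-1) else 0)"
  proof (cases "f b \<noteq> b")
    case True
    then show ?thesis using assms by (simp add: sum.delta)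
  qed simp
  finally show ?thesis .
qed

lemma QP_entry:
  assumes "a < n" "b < n" "\<forall>i<n. f i \<le> i" "\<forall>i<n. f i \<noteq> i \<longrightarrow> f (i-1) = f i"
  shows "Qm f a b - (if f b \<noteq> b then Qm f a (b-1) else 0) = (if a = b then 1 else 0)"
proof (cases "f b = b")
  case True
  have "f a \<le> a" using assms by auto
  then show ?thesis using True unfolding Qm_def by auto
next
  case False
  have "f b \<le> b" using assms by auto
  hence "f (b-1) = f b" "b > 0" using assms False by auto
  then show ?thesis using False unfolding Qm_def by auto
qed

lemma charpoly_reduce:
  fixes A :: "real mat" and f \<sigma> :: "nat \<Rightarrow> nat" and lam :: "nat \<Rightarrow> real"
  assumes A: "A \<in> carrier_mat n n" and kn: "k \<le> n"
  and f_le: "\<forall>i<n. f i \<le> i"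
  and f_prev: "\<forall>i<n. f i \<noteq> i \<longrightarrow> f (i-1) = f i"
  and s_lt: "\<forall>j<n. \<sigma> j < n" and s_inj: "inj_on \<sigma> {..<n}"
  and first: "\<forall>j<k. f (\<sigma> j) = \<sigma> j"
  and nonfirst: "\<forall>j. k \<le> j \<and> j < n \<longrightarrow> f (\<sigma> j) \<noteq> \<sigma> j"
  and twin: "\<forall>j m. k \<le> j \<and> j < n \<and> m < n \<longrightarrow> A $$ (m, \<sigma> j) - A $$ (m, \<sigma> j - 1)
       = lam j * ((if m = \<sigma> j then 1 else 0) - (if m = \<sigma> j - 1 then 1 else 0))"
  and linB: "\<exists>es. char_poly (mat k k (\<lambda>(i,j). \<Sum>m<n. if f m = \<sigma> i then A $$ (m, \<sigma> j) else 0)) = (\<Prod>a\<leftarrow>es. [:-a,1:])"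
  shows "char_poly A = char_poly (mat k k (\<lambda>(i,j). \<Sum>m<n. if f m = \<sigma> i then A $$ (m, \<sigma> j) else 0)) * (\<Prod>j\<leftarrow>[k..<n]. [:-lam j,1:])"
proof -
  define B where "B = mat k k (\<lambda>(i,j). \<Sum>m<n. if f m = \<sigma> i then A $$ (m, \<sigma> j) else 0)"
  define Q where "Q = mat n n (\<lambda>(i,m). Qm f (\<sigma> i) m)"
  define P where "P = mat n n (\<lambda>(m,j). Pm f m (\<sigma> j))"
  have Qc: "Q \<in> carrier_mat n n" and Pc: "P \<in> carrier_mat n n" unfolding Q_def P_def by auto
  have QP: "Q * P = 1\<^sub>m n"
  proof (rule eq_matI)
    fix i j assume ij: "i < dim_row (1\<^sub>m n)" "j < dim_col (1\<^sub>m n)"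
    hence ij': "i < n" "j < n" by auto
    have "(Q * P) $$ (i,j) = (\<Sum>m<n. Qm f (\<sigma> i) m * Pm f m (\<sigma> j))"
      using ij' unfolding Q_def P_def by (simp add: scalar_prod_def lessThan_atLeast0)
    also have "\<dots> = Qm f (\<sigma> i) (\<sigma> j) - (if f (\<sigma> j) \<noteq> \<sigma> j then Qm f (\<sigma> i) (\<sigma> j - 1) else 0)"
      by (rule sum_P, insert ij' s_lt f_le, auto)
    also have "\<dots> = (if \<sigma> i = \<sigma> j then 1 else 0)"
      by (rule QP_entry, insert ij' s_lt f_le f_prev, auto)
    also have "\<dots> = 1\<^sub>m n $$ (i,j)" using ij' s_inj by (auto dest: inj_onD)
    finally show "(Q * P) $$ (i,j) = 1\<^sub>m n $$ (i,j)" .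
  qed (auto simp: Q_def P_def)
  have PQ: "P * Q = 1\<^sub>m n" by (rule mat_mult_left_right_inverse[OF Qc Pc QP])
  define T where "T = Q * A * P"
  have Tc: "T \<in> carrier_mat n n" unfolding T_def using Qc Pc A by auto
  have sim: "similar_mat A T"
  proof (rule similar_matI[of _ _ P Q n])
    show "{A, T, P, Q} \<subseteq> carrier_mat n n" using A Tc Pc Qc by auto
    have "P * T * Q = (P * Q) * A * (P * Q)" unfolding T_def using A Pc Qc
      by (simp add: assoc_mult_mat[of _ n n _ n _ n])
    then show "A = P * T * Q" unfolding PQ using A by simp
  qed (auto simp: PQ QP)
  have AP: "(A * P) $$ (m, j) = A $$ (m, \<sigma> j) - (if f (\<sigma> j) \<noteq> \<sigma> j then A $$ (m, \<sigma> j - 1) else 0)"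
    if "m < n" "j < n" for m j
  proof -
    have "(A * P) $$ (m, j) = (\<Sum>l<n. A $$ (m,l) * Pm f l (\<sigma> j))"
      using that A unfolding P_def by (simp add: scalar_prod_def lessThan_atLeast0)
    also have "\<dots> = A $$ (m, \<sigma> j) - (if f (\<sigma> j) \<noteq> \<sigma> j then A $$ (m, \<sigma> j - 1) else 0)" by (rule sum_P, insert that s_lt f_le, auto)
    finally show ?thesis .
  qed
  have T_entry: "T $$ (i,j) = (\<Sum>m<n. Qm f (\<sigma> i) m * (A * P) $$ (m, j))" if "i < n" "j < n" for i j
  proof -
    have "T = Q * (A * P)" unfolding T_def using A Pc Qc by simp
    then show ?thesis using that A Pc Qc unfolding Q_def by (simp add: scalar_prod_def lessThan_atLeast0)
  qed
  define C where "C = mat (n-k) k (\<lambda>(i,j). T $$ (i+k, j))"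
  define D where "D = mat (n-k) (n-k) (\<lambda>(i,j). if i = j then lam (i+k) else (0::real))"
  have Teq: "T = four_block_mat B (0\<^sub>m k (n-k)) C D"
  proof (rule eq_matI)
    fix i j assume "i < dim_row (four_block_mat B (0\<^sub>m k (n-k)) C D)" "j < dim_col (four_block_mat B (0\<^sub>m k (n-k)) C D)"
    hence ij: "i < n" "j < n" using kn unfolding B_def D_def by auto
    show "T $$ (i,j) = four_block_mat B (0\<^sub>m k (n-k)) C D $$ (i,j)"
    proof (cases "j < k")
      case True
      have "T $$ (i,j) = (\<Sum>m<n. Qm f (\<sigma> i) m * A $$ (m, \<sigma> j))"
        using T_entry[OF ij] AP ij True first by simp
      moreover have "i < k \<Longrightarrow> (\<Sum>m<n. Qm f (\<sigma> i) m * A $$ (m, \<sigma> j)) = (\<Sum>m<n. if f m = \<sigma> i then A $$ (m, \<sigma> j) else 0)"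
      proof (rule sum.cong)
        fix m assume "i < k" "m \<in> {..<n}"
        then have "f (\<sigma> i) = \<sigma> i" "f m \<le> m" using first f_le by auto
        then show "Qm f (\<sigma> i) m * A $$ (m, \<sigma> j) = (if f m = \<sigma> i then A $$ (m, \<sigma> j) else 0)"
          unfolding Qm_def by auto
      qed simp
      ultimately show ?thesis using True ij kn unfolding B_def C_def D_def by auto
    next
      case False
      have "(A * P) $$ (m, j) = lam j * Pm f m (\<sigma> j)" if "m < n" for m
        using AP[OF that ij(2)] nonfirst twin False ij that unfolding Pm_def by auto
      hence "T $$ (i,j) = lam j * (\<Sum>m<n. Qm f (\<sigma> i) m * Pm f m (\<sigma> j))"
        using T_entry[OF ij] by (simp add: sum_distrib_left mult_ac)
      also have "(\<Sum>m<n. Qm f (\<sigma> i) m * Pm f m (\<sigma> j)) = (Q * P) $$ (i,j)"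
        using ij unfolding Q_def P_def by (simp add: scalar_prod_def lessThan_atLeast0)
      finally have "T $$ (i,j) = (if i = j then lam j else 0)" using QP ij by simp
      then show ?thesis using False ij kn unfolding B_def C_def D_def by auto
    qed
  qed (insert Tc kn, auto simp: B_def D_def)
  have Bc: "B \<in> carrier_mat k k" and Cc: "C \<in> carrier_mat (n-k) k" and Dc: "D \<in> carrier_mat (n-k) (n-k)"
    unfolding B_def C_def D_def by auto
  have utD: "upper_triangular D" unfolding D_def upper_triangular_def by auto
  have cD: "char_poly D = (\<Prod>j\<leftarrow>[k..<n]. [:-lam j,1:])"
  proof -
    have "char_poly D = (\<Prod>a\<leftarrow>diag_mat D. [:- a, 1:])" by (rule char_poly_upper_triangular[OF Dc utD])
    also have "diag_mat D = map lam [k..<n]"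
      unfolding diag_mat_def D_def using kn
      by (auto simp: list_eq_iff_nth_eq add.commute)
    finally show ?thesis by (simp add: o_def)
  qed
  have "char_poly A = char_poly T" by (rule char_poly_similar[OF sim])
  also have "\<dots> = char_poly B * char_poly D"
  proof (rule char_poly_0_block'[OF Teq _ _ Bc Cc Dc])
    show "\<exists>es. char_poly D = (\<Prod>a\<leftarrow>es. [:- a, 1:])"
      using cD by (intro exI[of _ "map lam [k..<n]"]) (simp add: o_def)
  qed (insert linB, auto simp: B_def)
  finally show ?thesis using cD unfolding B_def by simp
qed



lemma adj_sym: "adj G i j = adj G j i" unfolding adj_def by auto

lemma handshake: "2 * num_edges G = (\<Sum>i<order_g G. degree G i)"
proof -
  let ?N = "order_g G"
  define S1 where "S1 = {(i, j). i < j \<and> j < ?N \<and> adj G i j}"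
  define S2 where "S2 = {(i, j). j < i \<and> i < ?N \<and> adj G i j}"
  have fin1: "finite S1" unfolding S1_def
    by (rule finite_subset[of _ "{..<?N} \<times> {..<?N}"]) auto
  have S2eq: "S2 = prod.swap ` S1" unfolding S1_def S2_def
    by (auto simp: image_def adj_sym)
  have c2: "card S2 = card S1" unfolding S2eq by (rule card_image) (auto simp: inj_on_def)
  have "(\<Sum>i<?N. degree G i) = (\<Sum>i\<in>{..<?N}. card {j. j < ?N \<and> adj G i j})" unfolding degree_def by simp
  also have "\<dots> = card (SIGMA i:{..<?N}. {j. j < ?N \<and> adj G i j})"
    by (rule card_SigmaI[symmetric]) auto
  also have "(SIGMA i:{..<?N}. {j. j < ?N \<and> adj G i j}) = S1 \<union> S2"
    unfolding S1_def S2_def by (auto simp: adj_def order_g_def)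
  also have "card (S1 \<union> S2) = card S1 + card S2"
    by (rule card_Un_disjoint, insert fin1, auto simp: S2eq S1_def)
  finally show ?thesis using c2 unfolding num_edges_def S1_def by simp
qed

lemma avg_degree_eq: "avg_degree G = (\<Sum>i<order_g G. real (degree G i)) / real (order_g G)"
  unfolding avg_degree_def using arg_cong[OF handshake[of G], of real] by simp

lemma proots_lin: "proots (\<Prod>a\<leftarrow>es. [:- a, 1:]) = mset (es :: real list)"
proof (induct es)
  case (Cons a es)
  have nz: "(\<Prod>a\<leftarrow>es. [:- a, 1:]) \<noteq> (0::real poly)" by (auto simp: prod_list_zero_iff)
  have "proots (\<Prod>a\<leftarrow>a#es. [:- a, 1:]) = proots [:- a, 1:] + proots (\<Prod>a\<leftarrow>es. [:- a, 1:])"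
    by (simp only: list.map prod_list.Cons, rule proots_mult, insert nz, auto)
  then show ?case using Cons by simp
qed simp

lemma K_adj: "adj (complete_graph n) i j = (i < n \<and> j < n \<and> i \<noteq> j)"
  unfolding adj_def complete_graph_def by auto

lemma K_order: "order_g (complete_graph n) = n" unfolding order_g_def complete_graph_def by simp

lemma K_degree: "i < n \<Longrightarrow> degree (complete_graph n) i = n - 1"
proof -
  assume i: "i < n"
  have "{j. j < n \<and> adj (complete_graph n) i j} = {..<n} - {i}" by (auto simp: K_adj i)
  then show ?thesis unfolding degree_def K_order using i by simp
qed

lemma K_lap: "m < n \<Longrightarrow> b < n \<Longrightarrow> laplacian (complete_graph n) $$ (m, b) = (if m = b then real n - 1 else -1)"
  unfolding laplacian_def K_order using K_degree[of m n] by (auto simp: K_adj)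

lemma K_charpoly:
  assumes n: "n \<ge> 1"
  shows "char_poly (laplacian (complete_graph n)) = (\<Prod>a\<leftarrow>0 # replicate (n-1) (real n). [:- a, 1:])"
proof -
  let ?A = "laplacian (complete_graph n)"
  let ?B = "mat 1 1 (\<lambda>(i,j). \<Sum>m<n. if (\<lambda>_. 0::nat) m = id i then ?A $$ (m, id j) else 0)"
  have Ac: "?A \<in> carrier_mat n n" unfolding laplacian_def K_order by simp
  have sB: "(\<Sum>m<n. if (\<lambda>_. 0::nat) m = id 0 then ?A $$ (m, id 0) else 0) = 0"
  proof -
    have "(\<Sum>m<n. if (\<lambda>_. 0::nat) m = id 0 then ?A $$ (m, id 0) else 0) = (\<Sum>m<n. (if m = 0 then real n else 0) - 1)"
      by (rule sum.cong, insert n, auto simp: K_lap)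
    also have "\<dots> = 0" using n by (simp add: sum_subtractf sum.delta)
    finally show ?thesis .
  qed
  have B0: "?B = mat 1 1 (\<lambda>_. 0)" by (rule eq_matI) (use sB in auto)
  have cB: "char_poly ?B = (\<Prod>a\<leftarrow>[0]. [:- a, 1:])"
    unfolding B0 by (subst char_poly_upper_triangular[of _ 1]) (auto simp: upper_triangular_def diag_mat_def)
  have "char_poly ?A = char_poly ?B * (\<Prod>j\<leftarrow>[1..<n]. [:-(\<lambda>_. real n) j,1:])"
  proof (rule charpoly_reduce[OF Ac])
    show "\<forall>j m. 1 \<le> j \<and> j < n \<and> m < n \<longrightarrow> ?A $$ (m, id j) - ?A $$ (m, id j - 1) =
        (\<lambda>_. real n) j * ((if m = id j then 1 else 0) - (if m = id j - 1 then 1 else 0))"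
      by (auto simp: K_lap)
    show "\<exists>es. char_poly ?B = (\<Prod>a\<leftarrow>es. [:- a, 1:])" using cB by blast
  qed (insert n, auto)
  also have "map (\<lambda>j. [:-(\<lambda>_. real n) j,1:]) [1..<n] = replicate (n-1) [:- real n, 1:]"
    by (simp add: map_replicate_const)
  finally show ?thesis using cB by (simp add: map_replicate)
qed

lemma K_spectrum: "n \<ge> 1 \<Longrightarrow> lap_spectrum (complete_graph n) = mset (0 # replicate (n-1) (real n))"
  unfolding lap_spectrum_def by (subst K_charpoly, assumption, rule proots_lin)

lemma K_avg: "n \<ge> 1 \<Longrightarrow> avg_degree (complete_graph n) = real n - 1"
  unfolding avg_degree_eq K_order by (simp add: K_degree of_nat_diff)

lemma K_energy: "n \<ge> 1 \<Longrightarrow> lap_energy (complete_graph n) = 2 * real n - 2"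
proof -
  assume n: "n \<ge> 1"
  have "lap_energy (complete_graph n) = (\<Sum>x\<leftarrow>0 # replicate (n-1) (real n). \<bar>x - (real n - 1)\<bar>)"
    unfolding lap_energy_def K_spectrum[OF n] K_avg[OF n] by (simp only: mset_map[symmetric] sum_mset_sum_list)
  also have "\<dots> = (real n - 1) + real (n - 1)"
  proof -
    have "map (\<lambda>x. \<bar>x - (real n - 1)\<bar>) (replicate (n-1) (real n)) = replicate (n-1) (1::real)" by simp
    then show ?thesis using n sum_list_replicate[of "n - 1" "1::real"] by simp
  qed
  finally show ?thesis using n by (simp add: of_nat_diff)
qed



lemma order_empty[simp]: "order_g (empty_graph m) = m" unfolding order_g_def empty_graph_def by simp
lemma order_gunion[simp]: "order_g (gunion G1 G2) = order_g G1 + order_g G2" unfolding gunion_def order_g_def by simp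
lemma order_gjoin[simp]: "order_g (gjoin G1 G2) = order_g G1 + order_g G2" unfolding gjoin_def order_g_def by simp

lemma adj_empty[simp]: "adj (empty_graph m) i j = False" unfolding adj_def empty_graph_def by simp

lemma adj_lt: "adj G i j \<Longrightarrow> i < order_g G \<and> j < order_g G \<and> i \<noteq> j"
  unfolding adj_def order_g_def by auto

lemma adj_gunion: "adj (gunion G1 G2) i j = (i \<noteq> j \<and>
   ((i < order_g G1 \<and> j < order_g G1 \<and> adj G1 i j) \<or>
    (order_g G1 \<le> i \<and> order_g G1 \<le> j \<and> adj G2 (i - order_g G1) (j - order_g G1))))"
  using adj_lt[of G1 i j] adj_lt[of G2 "i - order_g G1" "j - order_g G1"] adj_sym[of G1 i j] adj_sym[of G2 "i - order_g G1" "j - order_g G1"]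
  unfolding adj_def[of "gunion G1 G2"] by (auto simp: gunion_def order_g_def)

lemma adj_gjoin: "adj (gjoin G1 G2) i j = (i \<noteq> j \<and> i < order_g G1 + order_g G2 \<and> j < order_g G1 + order_g G2 \<and>
   ((i < order_g G1 \<and> j < order_g G1 \<and> adj G1 i j) \<or>
    (order_g G1 \<le> i \<and> order_g G1 \<le> j \<and> adj G2 (i - order_g G1) (j - order_g G1)) \<or>
    (i < order_g G1 \<and> order_g G1 \<le> j) \<or> (j < order_g G1 \<and> order_g G1 \<le> i)))"
  using adj_lt[of G1 i j] adj_lt[of G2 "i - order_g G1" "j - order_g G1"] adj_sym[of G1 i j] adj_sym[of G2 "i - order_g G1" "j - order_g G1"]
  unfolding adj_def[of "gjoin G1 G2"] by (auto simp: gjoin_def gunion_def order_g_def)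

definition GA :: "nat \<Rightarrow> nat \<Rightarrow> nat \<Rightarrow> bool" where
  "GA r i j = (i < 4*r+4 \<and> j < 4*r+4 \<and> i \<noteq> j \<and> ((i < 2*r+2 \<and> 2*r+2 \<le> j) \<or> (j < 2*r+2 \<and> 2*r+2 \<le> i)
     \<or> (i = r \<and> r < j \<and> j < 2*r+2) \<or> (j = r \<and> r < i \<and> i < 2*r+2)
     \<or> (i = 3*r+2 \<and> 3*r+2 < j) \<or> (j = 3*r+2 \<and> 3*r+2 < i)))"

lemma G_order[simp]: "order_g (G_r r) = 4*r+4" unfolding G_r_def Let_def by simp

definition HA :: "nat \<Rightarrow> nat \<Rightarrow> nat \<Rightarrow> bool" where
  "HA r i j = (i < 2*r+2 \<and> j < 2*r+2 \<and> ((i = r \<and> r < j) \<or> (j = r \<and> r < i)))"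

lemma H_adj: "adj (gunion (empty_graph r) (gjoin (empty_graph 1) (empty_graph (r + 1)))) i j = HA r i j"
  unfolding adj_gjoin adj_gunion HA_def by auto

lemma G_adj: "adj (G_r r) i j = GA r i j"
proof -
  have oH: "order_g (gunion (empty_graph r) (gjoin (empty_graph 1) (empty_graph (r + 1)))) = 2*r+2" by simp
  have "adj (G_r r) i j = (i \<noteq> j \<and> i < (2*r+2)+(2*r+2) \<and> j < (2*r+2)+(2*r+2) \<and>
   ((i < 2*r+2 \<and> j < 2*r+2 \<and> HA r i j) \<or>
    (2*r+2 \<le> i \<and> 2*r+2 \<le> j \<and> HA r (i - (2*r+2)) (j - (2*r+2))) \<or>
    (i < 2*r+2 \<and> 2*r+2 \<le> j) \<or> (j < 2*r+2 \<and> 2*r+2 \<le> i)))"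
    unfolding G_r_def Let_def adj_gjoin H_adj oH by (rule refl)
  also have "\<dots> = GA r i j" unfolding HA_def GA_def by (rule iffI; elim conjE disjE; arith)
  finally show ?thesis .
qed



definition degf :: "nat \<Rightarrow> nat \<Rightarrow> nat" where
  "degf r i = (if i < r \<or> (2*r+2 \<le> i \<and> i < 3*r+2) then 2*r+2 else if i = r \<or> i = 3*r+2 then 3*r+3 else 2*r+3)"

lemma G_degree: assumes i: "i < 4*r+4" shows "degree (G_r r) i = degf r i"
proof -
  let ?S = "{j. j < 4*r+4 \<and> GA r i j}"
  have "degree (G_r r) i = card ?S" unfolding degree_def G_adj by simp
  also have "card ?S = degf r i"
  proof -
    consider "i < r" | "i = r" | "r < i \<and> i < 2*r+2" | "2*r+2 \<le> i \<and> i < 3*r+2" | "i = 3*r+2" | "3*r+2 < i" by linarith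
    then show ?thesis
    proof cases
      case 1
      then have "?S = {2*r+2..<4*r+4}" unfolding GA_def by auto
      then show ?thesis using 1 unfolding degf_def by simp
    next
      case 2
      then have "?S = {r+1..<4*r+4}" unfolding GA_def by auto
      then show ?thesis using 2 unfolding degf_def by simp
    next
      case 3
      then have "?S = insert r {2*r+2..<4*r+4}" unfolding GA_def by auto
      then show ?thesis using 3 unfolding degf_def by simp
    next
      case 4
      then have "?S = {0..<2*r+2}" unfolding GA_def by auto
      then show ?thesis using 4 unfolding degf_def by simp
    next
      case 5
      then have "?S = {0..<2*r+2} \<union> {3*r+3..<4*r+4}" unfolding GA_def by auto
      then show ?thesis using 5 by (simp add: degf_def card_Un_disjoint)
    next
      case 6
      then have "?S = insert (3*r+2) {0..<2*r+2}" unfolding GA_def using i by auto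
      then show ?thesis using 6 i unfolding degf_def by simp
    qed
  qed
  finally show ?thesis .
qed

lemma G_lap: "m < 4*r+4 \<Longrightarrow> b < 4*r+4 \<Longrightarrow> laplacian (G_r r) $$ (m, b) =
   (if m = b then real (degf r b) else if GA r m b then -1 else 0)"
  unfolding laplacian_def using G_degree[of b r] by (auto simp: G_adj)



definition ff :: "nat \<Rightarrow> nat \<Rightarrow> nat" where
  "ff r m = (if m < r then 0 else if m = r then r else if m < 2*r+2 then r+1 else
     if m < 3*r+2 then 2*r+2 else if m = 3*r+2 then 3*r+2 else 3*r+3)"

definition sg :: "nat \<Rightarrow> nat \<Rightarrow> nat" where
  "sg r j = (if j = 0 then 0 else if j = 1 then r else if j = 2 then r+1 else if j = 3 then 2*r+2
     else if j = 4 then 3*r+2 else if j = 5 then 3*r+3 else if j < r+5 then j - 5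
     else if j < 2*r+4 then j + r - 2 else if j < 3*r+4 then j - r - 2 else j)"

lemma less6: "(i::nat) < 6 \<longleftrightarrow> i = 0 \<or> i = 1 \<or> i = 2 \<or> i = 3 \<or> i = 4 \<or> i = 5" by auto

lemma ff_le: "ff r i \<le> i" unfolding ff_def by auto

lemma ff_prev: "ff r i \<noteq> i \<Longrightarrow> ff r (i-1) = ff r i" unfolding ff_def by (auto split: if_splits)

lemma sg_small: "sg r 0 = 0" "sg r 1 = r" "sg r (Suc 0) = r" "sg r 2 = r+1" "sg r 3 = 2*r+2" "sg r 4 = 3*r+2" "sg r 5 = 3*r+3"
  unfolding sg_def by auto
lemma sg_A: "6 \<le> j \<Longrightarrow> j < r+5 \<Longrightarrow> sg r j = j - 5" unfolding sg_def by auto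
lemma sg_B: "6 \<le> j \<Longrightarrow> r+5 \<le> j \<Longrightarrow> j < 2*r+4 \<Longrightarrow> sg r j = j + r - 2" unfolding sg_def by auto
lemma sg_C: "6 \<le> j \<Longrightarrow> 2*r+4 \<le> j \<Longrightarrow> j < 3*r+4 \<Longrightarrow> sg r j = j - r - 2" unfolding sg_def by auto
lemma sg_D: "6 \<le> j \<Longrightarrow> 3*r+4 \<le> j \<Longrightarrow> sg r j = j" unfolding sg_def by auto

lemma j_cases: fixes j r :: nat obtains "j < 6" | "6 \<le> j \<and> j < r+5" | "6 \<le> j \<and> r+5 \<le> j \<and> j < 2*r+4" | "6 \<le> j \<and> 2*r+4 \<le> j \<and> j < 3*r+4" | "6 \<le> j \<and> 3*r+4 \<le> j"
  by linarith

lemma sg_lt: assumes "r \<ge> 1" "j < 4*r+4" shows "sg r j < 4*r+4"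
  using assms by (cases rule: j_cases[where r=r and j=j]) (auto simp: less6 sg_small sg_A sg_B sg_C sg_D)

definition tg :: "nat \<Rightarrow> nat \<Rightarrow> nat" where
  "tg r b = (if b = 0 then 0 else if b = r then 1 else if b = r+1 then 2 else if b = 2*r+2 then 3
     else if b = 3*r+2 then 4 else if b = 3*r+3 then 5 else if b < r then b + 5
     else if b < 2*r+2 then b + r + 2 else if b < 3*r+2 then b + 2 - r else b)"

lemma tg_sg: assumes "r \<ge> 1" "j < 4*r+4" shows "tg r (sg r j) = j"
  using assms by (cases rule: j_cases[where r=r and j=j]) (auto simp: less6 sg_small sg_A sg_B sg_C sg_D tg_def)

lemma sg_inj: "r \<ge> 1 \<Longrightarrow> inj_on (sg r) {..<4*r+4}"
  by (rule inj_on_inverseI[of _ "tg r"]) (auto simp: tg_sg)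

lemma sg_first: "j < 6 \<Longrightarrow> ff r (sg r j) = sg r j"
  unfolding less6 by (auto simp: ff_def sg_small)

lemma sg_nonfirst: assumes "r \<ge> 1" "6 \<le> j" "j < 4*r+4" shows "ff r (sg r j) \<noteq> sg r j"
  using assms by (cases rule: j_cases[where r=r and j=j]) (auto simp: sg_A sg_B sg_C sg_D ff_def)



definition cl :: "nat \<Rightarrow> nat \<Rightarrow> nat" where
  "cl r i = (if i < r then 0 else if i = r then 1 else if i < 2*r+2 then 2 else if i < 3*r+2 then 3
     else if i = 3*r+2 then 4 else 5)"

definition cadj :: "nat \<Rightarrow> nat \<Rightarrow> bool" where
  "cadj c d = ((c < 3) \<noteq> (d < 3) \<or> (c = 1 \<and> d = 2) \<or> (c = 2 \<and> d = 1) \<or> (c = 4 \<and> d = 5) \<or> (c = 5 \<and> d = 4))"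

lemma cl_cases: fixes i r :: nat
  obtains "i < r" "cl r i = 0" | "i = r" "cl r i = 1" | "r < i" "i < 2*r+2" "cl r i = 2"
   | "2*r+2 \<le> i" "i < 3*r+2" "cl r i = 3" | "i = 3*r+2" "cl r i = 4" | "3*r+2 < i" "cl r i = 5"
  by (cases "i < r"; cases "i = r"; cases "i < 2*r+2"; cases "i < 3*r+2"; cases "i = 3*r+2"; simp add: cl_def)

lemma GA_cl: "GA r i j = (i < 4*r+4 \<and> j < 4*r+4 \<and> i \<noteq> j \<and> cadj (cl r i) (cl r j))"
  by (cases rule: cl_cases[where r=r and i=i]; cases rule: cl_cases[where r=r and i=j];
      simp add: GA_def cadj_def; arith)

definition dc :: "nat \<Rightarrow> nat \<Rightarrow> nat" where
  "dc r c = (if c = 0 \<or> c = 3 then 2*r+2 else if c = 1 \<or> c = 4 then 3*r+3 else 2*r+3)"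
definition sz :: "nat \<Rightarrow> nat \<Rightarrow> nat" where
  "sz r c = (if c = 0 \<or> c = 3 then r else if c = 1 \<or> c = 4 then 1 else r+1)"

lemma degf_cl: "degf r i = dc r (cl r i)"
  by (cases rule: cl_cases[where r=r and i=i]) (auto simp: degf_def dc_def)

lemma cl_prev: "ff r b \<noteq> b \<Longrightarrow> cl r (b - 1) = cl r b"
  unfolding ff_def cl_def by (auto split: if_splits)

lemma cl_sg: "r \<ge> 1 \<Longrightarrow> j < 6 \<Longrightarrow> cl r (sg r j) = j"
  unfolding less6 by (auto simp: cl_def sg_small)

lemma ff_sg_iff: "r \<ge> 1 \<Longrightarrow> i < 6 \<Longrightarrow> (ff r m = sg r i) = (cl r m = i)"
  unfolding less6 by (cases rule: cl_cases[where r=r and i=m]) (auto simp: ff_def sg_small)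

lemma cadj_irrefl: "\<not> cadj c c" unfolding cadj_def by auto

lemma G_twin: assumes "ff r b \<noteq> b" "b < 4*r+4" "m < 4*r+4"
  shows "laplacian (G_r r) $$ (m, b) - laplacian (G_r r) $$ (m, b - 1) =
     real (degf r b) * ((if m = b then 1 else 0) - (if m = b - 1 then 1 else 0))"
proof -
  have b0: "0 < b" using assms(1) ff_le[of r b] by (cases b) auto
  then obtain b' where bb: "b = Suc b'" by (cases b) auto
  have b1: "b' < 4*r+4" and b2: "b' < 4*r+3" using assms bb by simp_all
  have c: "cl r b' = cl r b" using cl_prev[OF assms(1)] bb by simp
  show ?thesis
    using c cadj_irrefl[of "cl r b"] b2 unfolding bb diff_Suc_1
    by (auto simp: G_lap[OF assms(3) assms(2)[unfolded bb]] G_lap[OF assms(3) b1] GA_cl degf_cl)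
qed

lemma cell_card: assumes "c < 6" shows "card {m. m < 4*r+4 \<and> cl r m = c} = sz r c"
proof -
  have "c = 0 \<or> c = 1 \<or> c = 2 \<or> c = 3 \<or> c = 4 \<or> c = 5" using assms by auto
  then show ?thesis
  proof (elim disjE)
    assume "c = 0" then have "{m. m < 4*r+4 \<and> cl r m = c} = {0..<r}" by (auto simp: cl_def)
    then show ?thesis using \<open>c = 0\<close> by (simp add: sz_def)
  next
    assume "c = 1" then have "{m. m < 4*r+4 \<and> cl r m = c} = {r}" by (auto simp: cl_def split: if_splits)
    then show ?thesis using \<open>c = 1\<close> by (simp add: sz_def)
  next
    assume "c = 2" then have "{m. m < 4*r+4 \<and> cl r m = c} = {r+1..<2*r+2}" by (auto simp: cl_def split: if_splits)
    then show ?thesis using \<open>c = 2\<close> by (simp add: sz_def)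
  next
    assume "c = 3" then have "{m. m < 4*r+4 \<and> cl r m = c} = {2*r+2..<3*r+2}" by (auto simp: cl_def split: if_splits)
    then show ?thesis using \<open>c = 3\<close> by (simp add: sz_def)
  next
    assume "c = 4" then have "{m. m < 4*r+4 \<and> cl r m = c} = {3*r+2}" by (auto simp: cl_def split: if_splits)
    then show ?thesis using \<open>c = 4\<close> by (simp add: sz_def)
  next
    assume "c = 5" then have "{m. m < 4*r+4 \<and> cl r m = c} = {3*r+3..<4*r+4}" by (auto simp: cl_def split: if_splits)
    then show ?thesis using \<open>c = 5\<close> by (simp add: sz_def)
  qed
qed

definition Bf :: "nat \<Rightarrow> nat \<Rightarrow> nat \<Rightarrow> real" where
  "Bf r i j = (if i = j then real (dc r j) else 0) - (if cadj i j then real (sz r i) else 0)"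

lemma B_entry: assumes "r \<ge> 1" "i < 6" "j < 6"
  shows "(\<Sum>m<4*r+4. if ff r m = sg r i then laplacian (G_r r) $$ (m, sg r j) else 0) = Bf r i j"
proof -
  let ?d = "sg r j"
  have d: "?d < 4*r+4" using sg_lt[OF assms(1), of j] assms by simp
  have cd: "cl r ?d = j" using cl_sg assms by simp
  have "(\<Sum>m<4*r+4. if ff r m = sg r i then laplacian (G_r r) $$ (m, ?d) else 0)
      = (\<Sum>m<4*r+4. (if m = ?d \<and> i = j then real (dc r j) else 0) - (if cl r m = i \<and> cadj i j then 1 else 0))"
  proof (rule sum.cong)
    fix m assume "m \<in> {..<4*r+4}"
    then have m: "m < 4*r+4" by simp
    show "(if ff r m = sg r i then laplacian (G_r r) $$ (m, ?d) else 0) =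
      (if m = ?d \<and> i = j then real (dc r j) else 0) - (if cl r m = i \<and> cadj i j then 1 else 0)"
      using cd cadj_irrefl[of j] unfolding ff_sg_iff[OF assms(1,2)] G_lap[OF m d] GA_cl degf_cl
      by (auto simp: m d)
  qed simp
  also have "\<dots> = (if i = j then real (dc r j) else 0) - (if cadj i j then real (card {m. m < 4*r+4 \<and> cl r m = i}) else 0)"
  proof -
    have s1: "(\<Sum>m<4*r+4. (if m = ?d \<and> i = j then real (dc r j) else 0)) = (if i = j then real (dc r j) else 0)"
      by (cases "i = j") (simp_all add: d)
    have s2: "(\<Sum>m<4*r+4. (if cl r m = i \<and> cadj i j then (1::real) else 0)) = (if cadj i j then real (card {m. m < 4*r+4 \<and> cl r m = i}) else 0)"
    proof (cases "cadj i j")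
      case True
      have "(\<Sum>m<4*r+4. (if cl r m = i then (1::real) else 0)) = (\<Sum>m\<in>{..<4*r+4} \<inter> {m. cl r m = i}. 1)"
        by (simp add: sum.If_cases)
      also have "{..<4*r+4} \<inter> {m. cl r m = i} = {m. m < 4*r+4 \<and> cl r m = i}" by auto
      finally show ?thesis using True by simp
    qed simp
    show ?thesis using s1 s2 by (simp add: sum_subtractf)
  qed
  also have "\<dots> = Bf r i j" unfolding Bf_def cell_card[OF assms(2)] ..
  finally show ?thesis .
qed




lemma sum6: "(\<Sum>i\<in>{0..<6::nat}. f i) = f 0 + f 1 + f 2 + f 3 + f 4 + (f 5 :: real)"
  by (simp add: eval_nat_numeral atLeast0LessThan)

definition Uf :: "nat \<Rightarrow> nat \<Rightarrow> nat \<Rightarrow> real" where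
  "Uf r a b = (if a = 0 then (if b = 0 then real r else if b = 1 then real r + 2 else 0)
    else if a = 1 then (if b = 0 then 1 else if b = 1 then -1 else 1)
    else (if b = 0 then real r + 1 else if b = 1 then - (real r + 1) else -1))"

definition Nf :: "nat \<Rightarrow> nat \<Rightarrow> nat \<Rightarrow> real" where
  "Nf r a b = (if a = 0 then real r + 2
    else if a = 1 then (if b = 0 then real r + 2 else - real r)
    else (if b = 0 then 0 else if b = 1 then (real r + 1) * (2 * real r + 2) else - (2 * real r + 2)))"

definition sgn6 :: "nat \<Rightarrow> nat \<Rightarrow> real" where "sgn6 i j = (if 3 \<le> i \<and> 3 \<le> j then -1 else 1)"

definition P6 where "P6 r = mat 6 6 (\<lambda>(i,j). sgn6 i j * Uf r (i mod 3) (j mod 3))"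
definition N6 where "N6 r = mat 6 6 (\<lambda>(i,j). sgn6 i j * Nf r (i mod 3) (j mod 3))"

lemma NP6_entry: "i < 6 \<Longrightarrow> j < 6 \<Longrightarrow> (\<Sum>k\<in>{0..<6}. (sgn6 i k * Nf r (i mod 3) (k mod 3)) * (sgn6 k j * Uf r (k mod 3) (j mod 3)))
   = (if i = j then 2 * ((real r + 2) * (2 * real r + 2)) else 0)"
  unfolding sum6 less6 by (elim disjE; simp add: sgn6_def Uf_def Nf_def; simp add: algebra_simps)
definition ev6 :: "nat \<Rightarrow> nat \<Rightarrow> real" where
  "ev6 r i = (if i = 0 then 0 else if i = 1 \<or> i = 4 then 2 * real r + 2 else if i = 2 \<or> i = 5 then 3 * real r + 4 else 4 * real r + 4)"

lemma BP6_entry: "i < 6 \<Longrightarrow> j < 6 \<Longrightarrow> (\<Sum>k\<in>{0..<6}. Bf r i k * (sgn6 k j * Uf r (k mod 3) (j mod 3)))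
   = sgn6 i j * Uf r (i mod 3) (j mod 3) * ev6 r j"
  unfolding sum6 less6 by (elim disjE; simp add: sgn6_def Uf_def Bf_def dc_def sz_def cadj_def ev6_def; simp add: algebra_simps)
definition Q6 where "Q6 r = mat 6 6 (\<lambda>(i,j). sgn6 i j * Nf r (i mod 3) (j mod 3) / (2 * ((real r + 2) * (2 * real r + 2))))"
definition D6 where "D6 r = mat 6 6 (\<lambda>(i,j). if i = j then ev6 r i else 0)"
definition B6 where "B6 r = mat 6 6 (\<lambda>(i,j). Bf r i j)"

lemma QP6: "Q6 r * P6 r = 1\<^sub>m 6"
proof (rule eq_matI)
  fix i j assume "i < dim_row (1\<^sub>m 6)" "j < dim_col (1\<^sub>m (6::nat))"
  then have ij: "i < 6" "j < 6" by auto
  have nz: "2 * ((real r + 2) * (2 * real r + 2)) \<noteq> 0" by (simp add: add_pos_pos)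
  have "(Q6 r * P6 r) $$ (i, j) = (\<Sum>k\<in>{0..<6}. (sgn6 i k * Nf r (i mod 3) (k mod 3)) * (sgn6 k j * Uf r (k mod 3) (j mod 3))) / (2 * ((real r + 2) * (2 * real r + 2)))"
    using ij by (simp add: Q6_def P6_def scalar_prod_def sum_divide_distrib)
  also have "\<dots> = 1\<^sub>m 6 $$ (i, j)" unfolding NP6_entry[OF ij] using ij nz by simp
  finally show "(Q6 r * P6 r) $$ (i, j) = 1\<^sub>m 6 $$ (i, j)" .
qed (auto simp: Q6_def P6_def)

lemma BP6: "B6 r * P6 r = P6 r * D6 r"
proof (rule eq_matI)
  fix i j assume "i < dim_row (P6 r * D6 r)" "j < dim_col (P6 r * D6 r)"
  then have ij: "i < 6" "j < 6" by (auto simp: P6_def D6_def)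
  have "(B6 r * P6 r) $$ (i, j) = (\<Sum>k\<in>{0..<6}. Bf r i k * (sgn6 k j * Uf r (k mod 3) (j mod 3)))"
    using ij by (simp add: B6_def P6_def scalar_prod_def)
  also have "\<dots> = sgn6 i j * Uf r (i mod 3) (j mod 3) * ev6 r j" by (rule BP6_entry[OF ij])
  also have "\<dots> = (P6 r * D6 r) $$ (i, j)"
    using ij by (simp add: D6_def P6_def scalar_prod_def sum.delta' if_distrib cong: if_cong)
  finally show "(B6 r * P6 r) $$ (i, j) = (P6 r * D6 r) $$ (i, j)" .
qed (auto simp: B6_def P6_def D6_def)

lemma charpoly_B6: "char_poly (B6 r) = (\<Prod>a\<leftarrow>map (ev6 r) [0..<6]. [:- a, 1:])"
proof -
  have c: "B6 r \<in> carrier_mat 6 6" "P6 r \<in> carrier_mat 6 6" "Q6 r \<in> carrier_mat 6 6" "D6 r \<in> carrier_mat 6 6"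
    by (auto simp: B6_def P6_def Q6_def D6_def)
  have PQ: "P6 r * Q6 r = 1\<^sub>m 6" by (rule mat_mult_left_right_inverse[OF c(3) c(2) QP6])
  have "B6 r = B6 r * (P6 r * Q6 r)" using c by (simp add: PQ)
  also have "\<dots> = (B6 r * P6 r) * Q6 r" using c by (simp add: assoc_mult_mat[of _ 6 6 _ 6 _ 6])
  also have "\<dots> = P6 r * D6 r * Q6 r" by (simp add: BP6)
  finally have "B6 r = P6 r * D6 r * Q6 r" .
  then have sim: "similar_mat (B6 r) (D6 r)"
    by (intro similar_matI[of _ _ "P6 r" "Q6 r" 6]) (use c PQ QP6 in auto)
  have "char_poly (B6 r) = char_poly (D6 r)" by (rule char_poly_similar[OF sim])
  also have "\<dots> = (\<Prod>a\<leftarrow>diag_mat (D6 r). [:- a, 1:])"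
    by (rule char_poly_upper_triangular[OF c(4)]) (auto simp: upper_triangular_def D6_def)
  also have "diag_mat (D6 r) = map (ev6 r) [0..<6]"
    by (auto simp: diag_mat_def D6_def list_eq_iff_nth_eq)
  finally show ?thesis .
qed


definition lamG :: "nat \<Rightarrow> nat \<Rightarrow> real" where "lamG r j = real (degf r (sg r j))"

lemma G_charpoly: assumes r: "r \<ge> 1"
  shows "char_poly (laplacian (G_r r)) = (\<Prod>a\<leftarrow>map (ev6 r) [0..<6] @ map (lamG r) [6..<4*r+4]. [:- a, 1:])"
proof -
  let ?A = "laplacian (G_r r)"
  let ?B = "mat 6 6 (\<lambda>(i,j). \<Sum>m<4*r+4. if ff r m = sg r i then ?A $$ (m, sg r j) else 0)"
  have Ac: "?A \<in> carrier_mat (4*r+4) (4*r+4)" unfolding laplacian_def by simp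
  have BB: "?B = B6 r" by (rule eq_matI) (auto simp: B6_def B_entry[OF r])
  have "char_poly ?A = char_poly ?B * (\<Prod>j\<leftarrow>[6..<4*r+4]. [:-lamG r j,1:])"
  proof (rule charpoly_reduce[OF Ac])
    show "\<forall>j m. 6 \<le> j \<and> j < 4*r+4 \<and> m < 4*r+4 \<longrightarrow> ?A $$ (m, sg r j) - ?A $$ (m, sg r j - 1) =
        lamG r j * ((if m = sg r j then 1 else 0) - (if m = sg r j - 1 then 1 else 0))"
      using G_twin sg_nonfirst[OF r] sg_lt[OF r] unfolding lamG_def by blast
    show "\<exists>es. char_poly ?B = (\<Prod>a\<leftarrow>es. [:- a, 1:])" unfolding BB charpoly_B6 by blast
  qed (insert r sg_lt[OF r] sg_inj[OF r] sg_first sg_nonfirst[OF r] ff_le ff_prev, auto)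
  then show ?thesis unfolding BB charpoly_B6 by (simp add: o_def)
qed

lemma lamG_1: "r \<ge> 1 \<Longrightarrow> 6 \<le> j \<Longrightarrow> j < 2*r+4 \<Longrightarrow> lamG r j = 2 * real r + 2"
  by (cases "j < r + 5") (auto simp: lamG_def sg_A sg_B degf_def)

lemma lamG_2: "r \<ge> 1 \<Longrightarrow> 2*r+4 \<le> j \<Longrightarrow> j < 4*r+4 \<Longrightarrow> lamG r j = 2 * real r + 3"
  by (cases "j < 3*r+4") (auto simp: lamG_def sg_C sg_D degf_def)

lemma G_spectrum: "r \<ge> 1 \<Longrightarrow> lap_spectrum (G_r r) = mset (map (ev6 r) [0..<6] @ map (lamG r) [6..<4*r+4])"
  unfolding lap_spectrum_def by (subst G_charpoly, assumption, rule proots_lin)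

lemma sum_degf: "(\<Sum>i<4*r+4. real (degf r i)) = (4 * real r + 4) * (2 * real r + 3)"
proof -
  have "(\<Sum>i<4*r+4. real (degf r i)) = (\<Sum>c\<in>{..<6}. \<Sum>i\<in>{x \<in> {..<4*r+4}. cl r x = c}. real (degf r i))"
    by (rule sum.group[symmetric]) (auto simp: cl_def)
  also have "\<dots> = (\<Sum>c\<in>{..<6}. real (sz r c) * real (dc r c))"
  proof (rule sum.cong)
    fix c assume c: "c \<in> {..<6::nat}"
    have "(\<Sum>i\<in>{x \<in> {..<4*r+4}. cl r x = c}. real (degf r i)) = (\<Sum>i\<in>{x \<in> {..<4*r+4}. cl r x = c}. real (dc r c))"
      by (rule sum.cong) (auto simp: degf_cl)
    also have "\<dots> = real (card {m. m < 4*r+4 \<and> cl r m = c}) * real (dc r c)" by simp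
    finally show "(\<Sum>i\<in>{x \<in> {..<4*r+4}. cl r x = c}. real (degf r i)) = real (sz r c) * real (dc r c)"
      using cell_card[of c r] c by simp
  qed simp
  also have "\<dots> = (4 * real r + 4) * (2 * real r + 3)"
    using sum6[of "\<lambda>c. real (sz r c) * real (dc r c)"] by (simp add: atLeast0LessThan sz_def dc_def algebra_simps)
  finally show ?thesis .
qed

lemma G_avg: "avg_degree (G_r r) = 2 * real r + 3"
proof -
  have "avg_degree (G_r r) = (\<Sum>i<4*r+4. real (degf r i)) / (4 * real r + 4)"
    unfolding avg_degree_eq G_order by (simp add: G_degree)
  also have "\<dots> = 2 * real r + 3" unfolding sum_degf by (simp add: add_pos_pos)
  finally show ?thesis .
qed

lemma G_energy: assumes r: "r \<ge> 1" shows "lap_energy (G_r r) = 8 * real r + 6"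
proof -
  let ?g = "\<lambda>x. \<bar>x - (2 * real r + 3)\<bar>"
  have "lap_energy (G_r r) = sum_list (map ?g (map (ev6 r) [0..<6])) + sum_list (map ?g (map (lamG r) [6..<4*r+4]))"
    unfolding lap_energy_def G_spectrum[OF r] G_avg by (simp only: mset_map[symmetric] sum_mset_sum_list map_append sum_list_append)
  also have "sum_list (map ?g (map (ev6 r) [0..<6])) = 6 * real r + 8"
    by (simp add: eval_nat_numeral upt_rec ev6_def)
  also have "sum_list (map ?g (map (lamG r) [6..<4*r+4])) = (\<Sum>j\<in>{6..<4*r+4}. ?g (lamG r j))"
    by (simp add: sum_set_upt_conv_sum_list_nat[symmetric] o_def)
  also have "\<dots> = (\<Sum>j\<in>{6..<2*r+4}. ?g (lamG r j)) + (\<Sum>j\<in>{2*r+4..<4*r+4}. ?g (lamG r j))"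
    by (rule sum.atLeastLessThan_concat[symmetric]) (use r in auto)
  also have "(\<Sum>j\<in>{6..<2*r+4}. ?g (lamG r j)) = (\<Sum>j\<in>{6..<2*r+4}. 1)"
    by (rule sum.cong) (auto simp: lamG_1[OF r])
  also have "(\<Sum>j\<in>{2*r+4..<4*r+4}. ?g (lamG r j)) = (\<Sum>j\<in>{2*r+4..<4*r+4}. 0)"
    by (rule sum.cong) (auto simp: lamG_2[OF r])
  finally show ?thesis using r by (simp add: of_nat_diff)
qed


theorem theorem2:
  fixes r :: nat
  assumes "r \<ge> 1"
  shows "order_g (G_r r) = 4 * r + 4
    \<and> lap_energy (G_r r) = lap_energy (complete_graph (4 * r + 4))
    \<and> lap_energy (complete_graph (4 * r + 4)) = 8 * real r + 6
    \<and> L_borderenergetic (G_r r)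
    \<and> lap_spectrum (G_r r) \<noteq> lap_spectrum (complete_graph (4 * r + 4))"
  proof -
  have r: "r \<ge> 1" by (rule assms)
  have eK: "lap_energy (complete_graph (4 * r + 4)) = 8 * real r + 6"
    using K_energy[of "4*r+4"] by simp
  have eG: "lap_energy (G_r r) = 8 * real r + 6" by (rule G_energy[OF r])
  have inG: "2 * real r + 2 \<in># lap_spectrum (G_r r)"
  proof -
    have "2 * real r + 2 \<in> ev6 r ` {0..<6}" by (rule image_eqI[of _ _ 1]) (simp_all add: ev6_def)
    then show ?thesis unfolding G_spectrum[OF r] by simp
  qed
  have notK: "2 * real r + 2 \<notin># lap_spectrum (complete_graph (4 * r + 4))"
    unfolding K_spectrum[of "4*r+4", simplified] using r by auto
  show ?thesis using eK eG inG notK unfolding L_borderenergetic_def G_order by auto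
qed

end
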